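(* Fix an integer $N\ge 3$. There is a conditional (adaptive) sampling procedure which, knowing only $N$, queries the values $F_{\vec B}(x_1),\dots,F_{\vec B}(x_k)$ of an unknown CDF $F_{\vec B}$ at $k\le\lfloor N/2\rfloor$ points, where each query point $x_j$ is determined by $N$ and the previously obtained values $F_{\vec B}(x_1),\dots,F_{\vec B}(x_{j-1})$, and which, for every binary digit vector $\vec B=(b_0,\dots,b_{N-1})$ with $2\le\|\vec B\|\le N-1$, completely determines $\vec B$ (and hence $F_{\vec B}$) from these values.
   Context: A binary digit vector of length (scale factor) $N\ge3$ is $\vec B=(b_0,\dots,b_{N-1})\in\{0,1\}^N$ with $2\le\|\vec B\|:=\sum_i b_i\le N-1$; its digit set is $D=\{i:b_i=1\}$. With $\phi_d(x)=(x+d)/N$ for $d\in D$, let $\mu_{\vec B}$ be the unique Borel probability measure with $\mu_{\vec B}=\frac{1}{\|\vec B\|}\sum_{d\in D}\mu_{\vec B}\circ\phi_d^{-1}$; it is supported on the attractor $C_{\vec B}\subset[0,1]$ of $\{\phi_d\}_{d\in D}$. The CDF is $F_{\vec B}(x)=\mu_{\vec B}([0,x])$, $x\in[0,1]$. *)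

theory Defs
  imports "HOL-Analysis.Analysis"
begin

definition digit_vector :: "nat \<Rightarrow> nat list \<Rightarrow> bool" where
  "digit_vector N B \<longleftrightarrow> length B = N \<and> set B \<subseteq> {0, 1} \<and>
     2 \<le> sum_list B \<and> sum_list B \<le> N - 1"

definition digit_set :: "nat list \<Rightarrow> nat set" where
  "digit_set B = {i. i < length B \<and> B ! i = 1}"

definition phi :: "nat \<Rightarrow> nat \<Rightarrow> real \<Rightarrow> real" where
  "phi N d x = (x + real d) / real N"

definition self_similar :: "nat list \<Rightarrow> real measure \<Rightarrow> bool" where
  "self_similar B \<mu> \<longleftrightarrow> sets \<mu> = sets borel \<and> emeasure \<mu> UNIV = 1 \<and>
     (\<forall>A \<in> sets borel. emeasure \<mu> A =
        (\<Sum>d\<in>digit_set B. emeasure \<mu> (phi (length B) d -` A)) / ennreal (real (sum_list B)))"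

definition mu_B :: "nat list \<Rightarrow> real measure" where
  "mu_B B = (THE \<mu>. self_similar B \<mu>)"

definition F_B :: "nat list \<Rightarrow> real \<Rightarrow> real" where
  "F_B B x = measure (mu_B B) {0..x}"

text \<open>Adaptive querying: a strategy q maps the list of values obtained so far to the
  next query point; answers q F j is the list of the first j obtained values.\<close>
fun answers :: "(real list \<Rightarrow> real) \<Rightarrow> (real \<Rightarrow> real) \<Rightarrow> nat \<Rightarrow> real list" where
  "answers q F 0 = []"
| "answers q F (Suc j) = answers q F j @ [F (q (answers q F j))]"

end

theory Submission
  imports Defs "HOL-Probability.Probability"
begin

lemma card_digit_set:
  assumes "set B \<subseteq> {0,1}"
  shows "card (digit_set B) = sum_list B"
proof -
  have "sum_list B = (\<Sum>i<length B. B ! i)"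
    by (simp add: sum_list_sum_nth atLeast0LessThan)
  also have "\<dots> = (\<Sum>i<length B. if B ! i = 1 then 1 else 0)"
    apply (rule sum.cong, simp)
    using assms nth_mem by fastforce
  also have "\<dots> = card {i. i < length B \<and> B ! i = 1}"
    by (simp add: sum.If_cases lessThan_def Collect_conj_eq Int_commute)
  finally show ?thesis unfolding digit_set_def by simp
qed

lemma digit_set_sub: "digit_set B \<subseteq> {..<length B}"
  unfolding digit_set_def by auto

lemma finite_digit_set[simp]: "finite (digit_set B)"
  using digit_set_sub finite_subset by blast

definition gmap :: "nat \<Rightarrow> nat stream \<Rightarrow> real" where
  "gmap N \<omega> = (\<Sum>i. real (min (\<omega> !! i) N) / real N ^ Suc i)"

lemma gmap_summable:
  assumes "N \<ge> 2" shows "summable (\<lambda>i. real (min (\<omega> !! i) N) / real N ^ Suc i)"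
proof (rule summable_comparison_test)
  show "summable (\<lambda>i. real N * (1 / real N) ^ Suc i)"
    using assms by (intro summable_mult summable_geometric_iff[THEN iffD2] summable_ignore_initial_segment[where k=1, simplified]) auto
  show "\<exists>Na. \<forall>n\<ge>Na. norm (real (min (\<omega> !! n) N) / real N ^ Suc n) \<le> real N * (1 / real N) ^ Suc n"
  proof (intro exI allI impI)
    fix n :: nat
    have "real (min (\<omega> !! n) N) \<le> real N" by simp
    hence "real (min (\<omega> !! n) N) / real N ^ Suc n \<le> real N / real N ^ Suc n"
      by (intro divide_right_mono) auto
    thus "norm (real (min (\<omega> !! n) N) / real N ^ Suc n) \<le> real N * (1 / real N) ^ Suc n"
      by (simp add: power_one_over)
  qed
qed

lemma gmap_Stream:
  assumes "N \<ge> 2" "x \<le> N"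
  shows "gmap N (x ## \<omega>) = phi N x (gmap N \<omega>)"
proof -
  let ?f = "\<lambda>i. real (min ((x ## \<omega>) !! i) N) / real N ^ Suc i"
  have s: "summable ?f" using gmap_summable[OF assms(1)] by blast
  have "gmap N (x ## \<omega>) = (\<Sum>i. ?f (Suc i)) + ?f 0"
    unfolding gmap_def using suminf_split_head[OF s] by simp
  also have "(\<Sum>i. ?f (Suc i)) = (\<Sum>i. (1 / real N) * (real (min (\<omega> !! i) N) / real N ^ Suc i))"
    by (simp add: field_simps)
  also have "\<dots> = (1 / real N) * gmap N \<omega>"
    unfolding gmap_def by (rule suminf_mult[OF gmap_summable[OF assms(1)]])
  finally show ?thesis using assms unfolding phi_def by (simp add: field_simps)
qed

lemma gmap_measurable[measurable]:
  "gmap N \<in> borel_measurable (stream_space (measure_pmf p))"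
  unfolding gmap_def by measurable

lemma phi_measurable[measurable]: "phi N d \<in> borel_measurable borel"
  unfolding phi_def by measurable

lemma exists_ss:
  assumes dv: "digit_vector N B" and N3: "N \<ge> 3"
  shows "self_similar B (distr (stream_space (measure_pmf (pmf_of_set (digit_set B)))) borel (gmap N))"
proof -
  let ?D = "digit_set B"
  have lenB: "length B = N" using dv unfolding digit_vector_def by simp
  have cardD: "card ?D = sum_list B" using dv card_digit_set unfolding digit_vector_def by blast
  have c2: "card ?D \<ge> 2" using cardD dv unfolding digit_vector_def by simp
  hence Dne: "?D \<noteq> {}" by auto
  let ?p = "pmf_of_set ?D"
  let ?M = "stream_space (measure_pmf ?p)"
  let ?mu = "distr ?M borel (gmap N)"
  interpret S: prob_space ?M by (rule prob_space.prob_space_stream_space[OF prob_space_measure_pmf])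
  have P: "prob_space ?mu" by (rule S.prob_space_distr) simp
  have emu: "emeasure ?mu A = (\<integral>\<^sup>+ \<omega>. indicator A (gmap N \<omega>) \<partial>?M)" if A: "A \<in> sets borel" for A
  proof -
    have "emeasure ?mu A = (\<integral>\<^sup>+y. indicator A y \<partial>?mu)"
      by (rule nn_integral_indicator[symmetric]) (use A in simp)
    also have "\<dots> = (\<integral>\<^sup>+ \<omega>. indicator A (gmap N \<omega>) \<partial>?M)"
      using A by (intro nn_integral_distr) (simp_all add: borel_measurable_indicator)
    finally show ?thesis .
  qed
  have eqA: "emeasure ?mu A = (\<Sum>d\<in>?D. emeasure ?mu (phi (length B) d -` A)) / ennreal (real (sum_list B))"
    if A: "A \<in> sets borel" for A
  proof -
    have "emeasure ?mu A = (\<integral>\<^sup>+ \<omega>. indicator A (gmap N \<omega>) \<partial>?M)"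
      by (rule emu[OF A])
    also have "\<dots> = (\<integral>\<^sup>+x. (\<integral>\<^sup>+\<omega>. indicator A (gmap N (x ## \<omega>)) \<partial>?M) \<partial>measure_pmf ?p)"
      using A by (subst prob_space.nn_integral_stream_space[OF prob_space_measure_pmf]) auto
    also have "\<dots> = (\<Sum>x\<in>?D. (\<integral>\<^sup>+\<omega>. indicator A (gmap N (x ## \<omega>)) \<partial>?M)) / card ?D"
      using Dne by (subst nn_integral_pmf_of_set) auto
    also have "(\<Sum>x\<in>?D. (\<integral>\<^sup>+\<omega>. indicator A (gmap N (x ## \<omega>)) \<partial>?M))
       = (\<Sum>x\<in>?D. emeasure ?mu (phi (length B) x -` A))"
    proof (rule sum.cong[OF refl])
      fix x assume x: "x \<in> ?D"
      hence "x < length B" unfolding digit_set_def by simp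
      hence xN: "x \<le> N" using lenB by simp
      have "(\<integral>\<^sup>+\<omega>. indicator A (gmap N (x ## \<omega>)) \<partial>?M) = (\<integral>\<^sup>+\<omega>. indicator (phi N x -` A) (gmap N \<omega>) \<partial>?M)"
      proof (rule nn_integral_cong)
        fix \<omega>
        have "gmap N (x ## \<omega>) = phi N x (gmap N \<omega>)" using gmap_Stream[of N x] N3 xN by simp
        thus "indicator A (gmap N (x ## \<omega>)) = (indicator (phi N x -` A) (gmap N \<omega>) :: ennreal)"
          by (simp add: indicator_def)
      qed
      also have "\<dots> = emeasure ?mu (phi N x -` A)"
        by (rule emu[symmetric]) (rule measurable_sets_borel[OF phi_measurable A])
      finally show "(\<integral>\<^sup>+\<omega>. indicator A (gmap N (x ## \<omega>)) \<partial>?M) = emeasure ?mu (phi (length B) x -` A)"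
        using lenB by simp
    qed
    also have "(of_nat (card ?D) :: ennreal) = ennreal (real (sum_list B))"
      using cardD by (simp add: ennreal_of_nat_eq_real_of_nat)
    finally show ?thesis .
  qed
  have one: "emeasure ?mu UNIV = 1"
    using prob_space.emeasure_space_1[OF P] by simp
  show ?thesis unfolding self_similar_def
  proof (intro conjI ballI)
    show "sets ?mu = sets borel" by simp
    show "emeasure ?mu UNIV = 1" by (rule one)
    fix A :: "real set" assume "A \<in> sets borel"
    thus "emeasure ?mu A = (\<Sum>d\<in>?D. emeasure ?mu (phi (length B) d -` A)) / ennreal (real (sum_list B))"
      by (rule eqA)
  qed
qed

locale ssm =
  fixes N :: nat and B :: "nat list" and \<mu> :: "real measure"
  assumes dv: "digit_vector N B" and N3: "N \<ge> 3" and ss: "self_similar B \<mu>"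
begin

abbreviation "D \<equiv> digit_set B"
abbreviation "n \<equiv> sum_list B"
definition G :: "real \<Rightarrow> real" where "G x = measure \<mu> {..x}"

lemma lenB: "length B = N" using dv unfolding digit_vector_def by simp
lemma cardD: "card D = n" using dv card_digit_set unfolding digit_vector_def by blast
lemma n2: "n \<ge> 2" using dv unfolding digit_vector_def by simp
lemma rn2: "real n \<ge> 2" using n2 by (metis of_nat_le_iff of_nat_numeral)
lemma nN: "n \<le> N - 1" using dv unfolding digit_vector_def by simp
lemma D_lt: "d \<in> D \<Longrightarrow> d < N" using lenB unfolding digit_set_def by simp

lemma sets_mu: "sets \<mu> = sets borel" using ss unfolding self_similar_def by simp
lemma space_mu: "space \<mu> = UNIV" using sets_eq_imp_space_eq[OF sets_mu] by simp

lemma prob: "prob_space \<mu>"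
  by (rule prob_spaceI) (use ss space_mu in \<open>simp add: self_similar_def\<close>)

sublocale P: prob_space \<mu> by (rule prob)

lemma realdist: "real_distribution \<mu>"
  unfolding real_distribution_def real_distribution_axioms_def using prob sets_mu by simp

lemma G_cdf: "G = cdf \<mu>" unfolding G_def cdf_def by auto

lemma G_nonneg: "0 \<le> G x" unfolding G_def by simp
lemma G_le1: "G x \<le> 1" using prob_space.prob_le_1[OF prob] unfolding G_def by simp
lemma G_mono: "x \<le> y \<Longrightarrow> G x \<le> G y"
  unfolding G_def using finite_measure.finite_measure_mono[OF prob_space.axioms(1)[OF prob], of "{..x}" "{..y}"] sets_mu by auto

lemma FE: "G x = (\<Sum>d\<in>D. G (real N * x - real d)) / real n"
proof -
  have A: "{..x} \<in> sets borel" by simp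
  have pre: "phi (length B) d -` {..x} = {..real N * x - real d}" for d
  proof -
    have Np: "real N > 0" using N3 by simp
    show ?thesis unfolding lenB using Np by (auto simp: phi_def pos_divide_le_eq algebra_simps)
  qed
  have em: "emeasure \<mu> S = ennreal (measure \<mu> S)" for S
    using P.emeasure_eq_measure by simp
  have "ennreal (G x) = (\<Sum>d\<in>D. ennreal (G (real N * x - real d))) / ennreal (real n)"
  proof -
    have "emeasure \<mu> {..x} = (\<Sum>d\<in>D. emeasure \<mu> (phi (length B) d -` {..x})) / ennreal (real n)"
      using ss A unfolding self_similar_def by blast
    thus ?thesis unfolding pre em G_def .
  qed
  also have "\<dots> = ennreal ((\<Sum>d\<in>D. G (real N * x - real d)) / real n)"
    using n2 by (simp add: G_nonneg sum_nonneg divide_ennreal)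
  finally show ?thesis
    using G_nonneg n2 by (simp add: sum_nonneg ennreal_inj)
qed

lemma sum_single:
  fixes f :: "nat \<Rightarrow> real"
  assumes "\<And>d. d \<in> D \<Longrightarrow> d \<noteq> d0 \<Longrightarrow> f d = 0"
  shows "sum f D = (if d0 \<in> D then f d0 else 0)"
proof -
  have "sum f D = (\<Sum>d\<in>D. if d = d0 then f d else 0)"
    using assms by (intro sum.cong) auto
  thus ?thesis by (simp add: sum.delta)
qed

lemma G_neg: assumes x: "x < 0" shows "G x = 0"
proof (rule ccontr)
  assume "G x \<noteq> 0"
  hence gp: "G x > 0" using G_nonneg[of x] by simp
  have step: "G t \<le> G (real N * t)" if "t < 0" for t
  proof -
    have "(\<Sum>d\<in>D. G (real N * t - real d)) \<le> (\<Sum>d\<in>D. G (real N * t))"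
      by (intro sum_mono G_mono) simp
    also have "\<dots> = real n * G (real N * t)" using cardD by simp
    finally show ?thesis using FE[of t] n2 by (simp add: divide_le_eq mult.commute)
  qed
  have iter: "G x \<le> G (real N ^ k * x)" for k
  proof (induction k)
    case (Suc k)
    have "real N ^ k * x < 0" using x N3 by (simp add: mult_pos_neg)
    from step[OF this] Suc show ?case by (simp add: mult.assoc)
  qed simp
  have "(cdf \<mu> \<longlongrightarrow> 0) at_bot"
    using finite_borel_measure.cdf_lim_at_bot[OF real_distribution.finite_borel_measure_M[OF realdist]] .
  hence "eventually (\<lambda>t. cdf \<mu> t < G x) at_bot"
    using gp by (simp add: order_tendsto_iff)
  then obtain T where T: "\<And>t. t \<le> T \<Longrightarrow> cdf \<mu> t < G x"
    by (auto simp: eventually_at_bot_linorder)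
  obtain k where k: "T / x < real N ^ k" using real_arch_pow[of "real N" "T / x"] N3 by auto
  have "real N ^ k * x \<le> T" using k x by (simp add: divide_less_eq mult.commute)
  hence "G (real N ^ k * x) < G x" using T G_cdf by simp
  with iter[of k] show False by simp
qed

lemma G_gt1: assumes x: "x > 1" shows "G x = 1"
proof (rule ccontr)
  assume "G x \<noteq> 1"
  hence gp: "G x < 1" using G_le1[of x] by simp
  have step: "G (1 + real N * (t - 1)) \<le> G t" for t
  proof -
    have "real n * G (1 + real N * (t - 1)) = (\<Sum>d\<in>D. G (1 + real N * (t - 1)))" using cardD by simp
    also have "\<dots> \<le> (\<Sum>d\<in>D. G (real N * t - real d))"
    proof (intro sum_mono G_mono)
      fix d assume "d \<in> D"
      hence "real d \<le> real N - 1" using D_lt[of d] by linarith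
      thus "1 + real N * (t - 1) \<le> real N * t - real d" by (simp add: algebra_simps)
    qed
    finally show ?thesis using FE[of t] n2 by (simp add: le_divide_eq mult.commute)
  qed
  have iter: "G (1 + real N ^ k * (x - 1)) \<le> G x" for k
  proof (induction k)
    case (Suc k)
    have "1 + real N * ((1 + real N ^ k * (x - 1)) - 1) = 1 + real N ^ Suc k * (x - 1)" by simp
    with step[of "1 + real N ^ k * (x - 1)"] Suc show ?case by (metis order_trans)
  qed simp
  have "(cdf \<mu> \<longlongrightarrow> 1) at_top"
    using real_distribution.cdf_lim_at_top_prob[OF realdist] .
  hence "eventually (\<lambda>t. G x < cdf \<mu> t) at_top"
    using gp by (simp add: order_tendsto_iff)
  then obtain T where T: "\<And>t. t \<ge> T \<Longrightarrow> G x < cdf \<mu> t"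
    by (auto simp: eventually_at_top_linorder)
  obtain k where k: "(T - 1) / (x - 1) < real N ^ k" using real_arch_pow[of "real N" "(T - 1) / (x - 1)"] N3 by auto
  have "T \<le> 1 + real N ^ k * (x - 1)" using k x by (simp add: divide_less_eq mult.commute)
  hence "G x < G (1 + real N ^ k * (x - 1))" using T G_cdf by simp
  with iter[of k] show False by simp
qed

lemma G_0: "G 0 = 0"
proof -
  have "(\<Sum>d\<in>D. G (real N * 0 - real d)) = (if 0 \<in> D then G (real N * 0 - real 0) else 0)"
    by (rule sum_single) (auto intro: G_neg)
  also have "\<dots> \<le> G 0" using G_nonneg[of 0] by simp
  finally have s: "(\<Sum>d\<in>D. G (real N * 0 - real d)) \<le> G 0" .
  have "G 0 = (\<Sum>d\<in>D. G (real N * 0 - real d)) / real n" by (rule FE)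
  also have "\<dots> \<le> G 0 / real n" by (rule divide_right_mono[OF s]) simp
  finally have "G 0 \<le> G 0 / real n" .
  hence a: "G 0 * real n \<le> G 0" using n2 by (simp add: le_divide_eq)
  have "G 0 * 2 \<le> G 0 * real n" using n2 G_nonneg[of 0] by (intro mult_left_mono) auto
  thus ?thesis using a G_nonneg[of 0] by linarith
qed

lemma G_le0: "t \<le> 0 \<Longrightarrow> G t = 0"
  using G_neg G_0 by (cases "t < 0") auto

lemma G_1: "G 1 = 1"
proof -
  have "(\<Sum>d\<in>D. G (real N * 1 - real d)) = (\<Sum>d\<in>D. (if d = N - 1 then G 1 - 1 else 0) + 1)"
  proof (intro sum.cong refl)
    fix d assume "d \<in> D"
    hence "d < N" by (rule D_lt)
    thus "G (real N * 1 - real d) = (if d = N - 1 then G 1 - 1 else 0) + 1"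
      using G_gt1[of "real N * 1 - real d"] by (auto simp: of_nat_diff)
  qed
  also have "\<dots> = (if N - 1 \<in> D then G 1 - 1 else 0) + real n"
    by (simp add: sum.distrib sum.delta cardD)
  finally have s: "(\<Sum>d\<in>D. G (real N * 1 - real d)) = (if N - 1 \<in> D then G 1 - 1 else 0) + real n" .
  have "G 1 = (\<Sum>d\<in>D. G (real N * 1 - real d)) / real n" by (rule FE)
  also note s
  finally have e0: "G 1 = ((if N - 1 \<in> D then G 1 - 1 else 0) + real n) / real n" .
  have nz: "real n \<noteq> 0" using rn2 by linarith
  show ?thesis
  proof (cases "N - 1 \<in> D")
    case True
    with e0 have "G 1 = (G 1 - 1 + real n) / real n" by simp
    hence "G 1 * real n = G 1 - 1 + real n" by (simp only: nonzero_eq_divide_eq[OF nz])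
    hence "(G 1 - 1) * (real n - 1) = 0" by (simp add: algebra_simps)
    thus ?thesis using rn2 by simp
  next
    case False
    from e0 False have "G 1 = (0 + real n) / real n" by (simp only: if_False)
    thus ?thesis using nz by (metis add_0 divide_self)
  qed
qed

lemma G_ge1: "t \<ge> 1 \<Longrightarrow> G t = 1"
  using G_gt1 G_1 by (cases "t > 1") auto

lemma G_step:
  assumes a: "a < N" and y: "0 \<le> y" "y \<le> 1"
  shows "G ((real a + y) / real N) = (real (card {d\<in>D. d < a}) + (if a \<in> D then G y else 0)) / real n"
proof -
  have Np: "real N > 0" using N3 by simp
  have "(\<Sum>d\<in>D. G (real N * ((real a + y) / real N) - real d))
      = (\<Sum>d\<in>D. (if d < a then 1 else 0) + (if d = a then G y else 0))"
  proof (intro sum.cong refl)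
    fix d assume "d \<in> D"
    have e: "real N * ((real a + y) / real N) - real d = real a + y - real d" using Np by simp
    have "G (real a + y - real d) = (if d < a then 1 else 0) + (if d = a then G y else 0)"
    proof (cases "d < a")
      case True
      hence "real d + 1 \<le> real a" by linarith
      thus ?thesis using True y G_ge1[of "real a + y - real d"] by simp
    next
      case False
      show ?thesis
      proof (cases "d = a")
        case False
        with \<open>\<not> d < a\<close> have "real a + 1 \<le> real d" by linarith
        thus ?thesis using False \<open>\<not> d < a\<close> y G_le0[of "real a + y - real d"] by simp
      qed simp
    qed
    thus "G (real N * ((real a + y) / real N) - real d) = (if d < a then 1 else 0) + (if d = a then G y else 0)"
      unfolding e .
  qed
  also have "\<dots> = real (card {d\<in>D. d < a}) + (if a \<in> D then G y else 0)"
    by (simp add: sum.distrib sum.delta sum.If_cases Int_def)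
  finally show ?thesis using FE[of "(real a + y) / real N"] by simp
qed

lemma F_eq_G:
  assumes "0 \<le> x"
  shows "measure \<mu> {0..x} = G x"
proof -
  have "measure \<mu> {..<0} \<le> measure \<mu> {..0}" by (intro P.finite_measure_mono) (auto simp: sets_mu)
  hence z: "measure \<mu> {..<0} = 0" using G_0 unfolding G_def by (simp add: measure_nonneg antisym)
  have "G x = measure \<mu> ({..<0} \<union> {0..x})" unfolding G_def using assms
    by (intro arg_cong[where f="measure \<mu>"]) auto
  also have "\<dots> \<le> measure \<mu> {..<0} + measure \<mu> {0..x}"
    by (intro measure_Un_le) (auto simp: sets_mu)
  finally have "G x \<le> measure \<mu> {0..x}" using z by simp
  moreover have "measure \<mu> {0..x} \<le> G x" unfolding G_def
    by (intro P.finite_measure_mono) (auto simp: sets_mu)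
  ultimately show ?thesis by simp
qed

end

lemma ss_unique:
  assumes dv: "digit_vector N B" and N3: "N \<ge> 3" and s1: "self_similar B \<mu>" and s2: "self_similar B \<nu>"
  shows "\<mu> = \<nu>"
proof -
  interpret m1: ssm N B \<mu> using dv N3 s1 by unfold_locales
  interpret m2: ssm N B \<nu> using dv N3 s2 by unfold_locales
  define H where "H x = m1.G x - m2.G x" for x
  have Hb: "\<bar>H x\<bar> \<le> 1" for x unfolding H_def using m1.G_nonneg m1.G_le1 m2.G_nonneg m2.G_le1
    by (simp add: abs_le_iff) (metis diff_le_eq add_increasing2 order_trans diff_le_self m1.G_nonneg m2.G_nonneg m1.G_le1 m2.G_le1)
  have H0: "H t = 0" if "t \<le> 0 \<or> t \<ge> 1" for t
    using that m1.G_le0 m2.G_le0 m1.G_ge1 m2.G_ge1 unfolding H_def by auto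
  have HFE: "H x = (\<Sum>d\<in>digit_set B. H (real N * x - real d)) / real (sum_list B)" for x
    unfolding H_def using m1.FE[of x] m2.FE[of x] by (simp add: sum_subtractf diff_divide_distrib)
  have rn2: "real (sum_list B) \<ge> 2" by (rule m1.rn2)
  have bound: "\<bar>H x\<bar> \<le> 1 / real (sum_list B) ^ k" for k x
  proof (induction k arbitrary: x)
    case 0 then show ?case using Hb by simp
  next
    case (Suc k)
    define d0 where "d0 = nat \<lfloor>real N * x\<rfloor>"
    have "(\<Sum>d\<in>digit_set B. H (real N * x - real d)) = (if d0 \<in> digit_set B then H (real N * x - real d0) else 0)"
    proof (rule m1.sum_single)
      fix d assume "d \<in> digit_set B" "d \<noteq> d0"
      show "H (real N * x - real d) = 0"
      proof (rule H0, rule ccontr)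
        assume "\<not> (real N * x - real d \<le> 0 \<or> real N * x - real d \<ge> 1)"
        hence "real d < real N * x" "real N * x < real d + 1" by auto
        hence "\<lfloor>real N * x\<rfloor> = int d" by (simp add: floor_eq_iff)
        hence "d0 = d" unfolding d0_def by simp
        with \<open>d \<noteq> d0\<close> show False by simp
      qed
    qed
    hence "\<bar>\<Sum>d\<in>digit_set B. H (real N * x - real d)\<bar> \<le> 1 / real (sum_list B) ^ k"
      using Suc.IH[of "real N * x - real d0"] by (auto simp: divide_nonneg_nonneg)
    hence "\<bar>\<Sum>d\<in>digit_set B. H (real N * x - real d)\<bar> / real (sum_list B) \<le> (1 / real (sum_list B) ^ k) / real (sum_list B)"
      by (rule divide_right_mono) (use rn2 in simp)
    hence "\<bar>H x\<bar> \<le> (1 / real (sum_list B) ^ k) / real (sum_list B)"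
      using HFE[of x] rn2 by (simp add: abs_divide)
    thus ?case by (simp add: mult.commute)
  qed
  have "H x = 0" for x
  proof (rule ccontr)
    assume "H x \<noteq> 0"
    hence hp: "\<bar>H x\<bar> > 0" by simp
    obtain k where k: "1 / \<bar>H x\<bar> < real (sum_list B) ^ k"
      using real_arch_pow[of "real (sum_list B)" "1 / \<bar>H x\<bar>"] rn2 by auto
    hence "1 / real (sum_list B) ^ k < \<bar>H x\<bar>" using hp rn2
      by (simp add: divide_less_eq mult.commute)
    with bound[of x k] show False by simp
  qed
  hence "cdf \<mu> = cdf \<nu>" unfolding m1.G_cdf[symmetric] m2.G_cdf[symmetric] H_def by auto
  thus ?thesis using cdf_unique m1.realdist m2.realdist by blast
qed

lemma mu_B_ss:
  assumes dv: "digit_vector N B" and N3: "N \<ge> 3"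
  shows "self_similar B (mu_B B)"
proof -
  have "self_similar B (THE \<mu>. self_similar B \<mu>)"
    by (rule theI[of _ "distr (stream_space (measure_pmf (pmf_of_set (digit_set B)))) borel (gmap N)"])
       (use exists_ss[OF dv N3] ss_unique[OF dv N3] in auto)
  thus ?thesis unfolding mu_B_def .
qed

fun hZ :: "bool \<Rightarrow> bool \<Rightarrow> real \<Rightarrow> nat \<Rightarrow> real" where
  "hZ b g m 0 = 1"
| "hZ b g m (Suc i) = ((if b then 1 else 0) + (if g then hZ b g m i else 0)) / m"

lemma hZ_00: "hZ False False m (Suc i) = 0" by simp
lemma hZ_10: "hZ True False m (Suc i) = 1 / m" by simp
lemma hZ_01: "hZ False True m i = 1 / m ^ i" by (induction i) auto
lemma hZ_11_aux: assumes "m \<ge> 2" shows "hZ True True m i - 1 / (m - 1) = ((m - 2) / (m - 1)) / m ^ i"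
proof (induction i)
  case 0 then show ?case using assms by (simp add: field_simps)
next
  case (Suc i)
  have a: "m - 1 \<noteq> 0" "m \<noteq> 0" using assms by auto
  have "hZ True True m (Suc i) - 1 / (m - 1) = (1 + hZ True True m i) / m - 1 / (m - 1)" by simp
  also have "\<dots> = (hZ True True m i - 1 / (m - 1)) / m" using a by (simp add: field_simps)
  also have "\<dots> = ((m - 2) / (m - 1)) / m ^ Suc i" using Suc by simp
  finally show ?case .
qed

lemma hZ_11: assumes "m \<ge> 2" shows "hZ True True m i = 1 / (m - 1) + (m - 2) / ((m - 1) * m ^ i)"
  using hZ_11_aux[OF assms, of i] by (simp add: algebra_simps)

lemma hZ_11_lb: assumes "m \<ge> 2" shows "hZ True True m i \<ge> 1 / (m - 1)"
  using assms by (simp add: hZ_11)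

lemma hZ_11_gt: assumes "m \<ge> 3" shows "hZ True True m i > 1 / (m - 1)"
  using assms by (simp add: hZ_11)

lemma hZ_11_ub: assumes "m \<ge> 3" "i \<ge> 2" shows "hZ True True m i < 1 / (m - 2)"
proof -
  have m2: "m \<ge> 2" using assms by simp
  have "(m - 2)^2 = m ^ 2 - 4 * m + 4" by (simp add: power2_eq_square algebra_simps)
  hence "(m - 2)^2 < m ^ 2" using assms by linarith
  also have "m ^ 2 \<le> m ^ i" using assms by (intro power_increasing) auto
  finally have lt: "(m - 2) ^ 2 < m ^ i" .
  have "(m - 2) / ((m - 1) * m ^ i) < (m - 2) / ((m - 1) * (m - 2) ^ 2)"
    using assms lt by (intro divide_strict_left_mono mult_strict_left_mono mult_pos_pos) auto
  also have "\<dots> = 1 / ((m - 1) * (m - 2))"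
    using assms by (simp add: power2_eq_square)
  also have "1 / ((m - 1) * (m - 2)) = 1 / (m - 2) - 1 / (m - 1)"
    using assms by (simp add: field_simps)
  finally show ?thesis using m2 by (simp add: hZ_11)
qed

lemma V11_ne_V10:
  fixes m m' :: nat
  assumes "m \<ge> 2" "m' \<ge> 2" "i \<ge> 2"
  shows "hZ True True (real m) i \<noteq> 1 / real m'"
proof
  assume eq: "hZ True True (real m) i = 1 / real m'"
  show False
  proof (cases "m = 2")
    case True
    hence "hZ True True (real m) i = 1" by (simp add: hZ_11)
    moreover have "1 / real m' < 1" using assms by simp
    ultimately show False using eq by simp
  next
    case False
    hence m3: "real m \<ge> 3" using assms by simp
    have a: "1 / (real m - 1) < 1 / real m'" using hZ_11_gt[OF m3, of i] eq by simp
    have b: "1 / real m' < 1 / (real m - 2)" using hZ_11_ub[OF m3 assms(3)] eq by simp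
    from a have "real m' < real m - 1" using m3 assms by (simp add: divide_less_eq_1 frac_less2 field_simps)
    moreover from b have "real m - 2 < real m'" using m3 assms by (simp add: field_simps)
    ultimately have "real (m' + 1) < real m" "real m < real (m' + 2)" by simp_all
    hence "m' + 1 < m" "m < m' + 2" by (simp_all only: of_nat_less_iff)
    thus False by linarith
  qed
qed

lemma V11_inj:
  fixes m m' :: nat
  assumes "m \<ge> 2" "m' \<ge> 2" "i \<ge> 2" "hZ True True (real m) i = hZ True True (real m') i"
  shows "m = m'"
proof (rule ccontr)
  assume ne: "m \<noteq> m'"
  have lt: "hZ True True (real b) i < hZ True True (real a) i" if "2 \<le> a" "a < b" for a b :: nat
  proof -
    have b3: "real b \<ge> 3" using that by simp
    have "hZ True True (real b) i < 1 / (real b - 2)" by (rule hZ_11_ub[OF b3 assms(3)])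
    also have "\<dots> \<le> 1 / (real a - 1)" using that by (intro divide_left_mono) auto
    also have "\<dots> \<le> hZ True True (real a) i" using that by (intro hZ_11_lb) simp
    finally show ?thesis .
  qed
  show False
  proof (cases "m < m'")
    case True with lt[of m m'] assms show False by simp
  next
    case False with ne have "m' < m" by simp
    with lt[of m' m] assms show False by simp
  qed
qed

lemma DZ:
  fixes m m' N :: nat
  assumes N3: "N \<ge> 3" and m: "2 \<le> m" "m \<le> N - 1" and m': "2 \<le> m'" "m' \<le> N - 1"
    and eq: "hZ b g (real m) (Suc N) = hZ b' g' (real m') (Suc N)"
  shows "b = b' \<and> g = g' \<and> ((b \<or> g) \<longrightarrow> m = m')"
proof -
  have small: "hZ False True (real k) (Suc N) < 1 / real N" if "2 \<le> k" for k :: nat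
  proof -
    have "real N < 2 ^ N" using of_nat_less_numeral_power_cancel_iff less_exp by (metis of_nat_numeral)
    also have "(2::real) ^ N \<le> 2 ^ Suc N" by (rule power_increasing) auto
    also have "(2::real) ^ Suc N \<le> real k ^ Suc N" using that by (intro power_mono) auto
    finally have h: "real N < real k ^ Suc N" .
    have "1 / real k ^ Suc N < 1 / real N"
      by (rule divide_strict_left_mono[OF h]) (use N3 that in auto)
    thus ?thesis by (simp only: hZ_01)
  qed
  have big10: "hZ True False (real k) (Suc N) > 1 / real N" if "2 \<le> k" "k \<le> N - 1" for k :: nat
  proof -
    have "1 / real N < 1 / real k" by (rule divide_strict_left_mono) (use that N3 in auto)
    thus ?thesis by (simp only: hZ_10)
  qed
  have big11: "hZ True True (real k) (Suc N) > 1 / real N" if "2 \<le> k" "k \<le> N - 1" for k :: nat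
  proof -
    have "1 / real N < 1 / (real k - 1)" using that N3 by (intro frac_less2) auto
    also have "\<dots> \<le> hZ True True (real k) (Suc N)" using that by (intro hZ_11_lb) simp
    finally show ?thesis .
  qed
  have pos10: "hZ True False (real k) (Suc N) > 0" if "2 \<le> k" for k :: nat
    by (simp only: hZ_10) (use that in simp)
  have inj01: "k = k'" if "hZ False True (real k) (Suc N) = hZ False True (real k') (Suc N)" "2 \<le> k" "2 \<le> k'" for k k' :: nat
  proof -
    from that(1) have "1 / real k ^ Suc N = 1 / real k' ^ Suc N" by (simp only: hZ_01)
    hence "real k ^ Suc N = real k' ^ Suc N" by (metis divide_cancel_left zero_neq_one)
    hence "real k = real k'" by (rule power_eq_imp_eq_base) simp_all
    thus ?thesis by simp
  qed
  have pos01: "hZ False True (real k) (Suc N) > 0" if "2 \<le> k" for k :: nat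
    by (simp only: hZ_01) (use that in simp)
  have pos11: "hZ True True (real k) (Suc N) > 0" if "2 \<le> k" "k \<le> N - 1" for k :: nat
  proof -
    have "0 < 1 / real N" using N3 by simp
    thus ?thesis using big11[OF that] by linarith
  qed
  have ne1011: "hZ True True (real k) (Suc N) \<noteq> hZ True False (real k') (Suc N)" if "2 \<le> k" "2 \<le> k'" for k k' :: nat
    using V11_ne_V10[of k k' "Suc N"] that N3 by simp
  show ?thesis
  proof (cases b; cases g; cases b'; cases g')
  qed (use eq m m' small[OF m(1)] small[OF m'(1)] big10[OF m] big10[OF m'] big11[OF m] big11[OF m']
         pos10[OF m(1)] pos10[OF m'(1)] pos01[OF m(1)] pos01[OF m'(1)] pos11[OF m] pos11[OF m']
         ne1011[OF m(1) m'(1)] ne1011[OF m'(1) m(1)] inj01[OF _ m(1) m'(1)]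
         V11_inj[of m m' "Suc N"] in \<open>simp_all del: hZ.simps(2) add: hZ_10 hZ_00\<close>)
qed

definition zp :: "nat \<Rightarrow> nat \<Rightarrow> real" where
  "zp N j = ((\<lambda>y. (real (2*j+1) + y) / real N) ^^ Suc N) 1"
definition pp :: "nat \<Rightarrow> nat \<Rightarrow> real" where
  "pp N j = (real (2*j+1) + real (2*j) / real N) / real N"
definition qs :: "nat \<Rightarrow> real list \<Rightarrow> real" where
  "qs N vs = (if length vs < N div 2 then (if (\<forall>v\<in>set vs. v = 0) then zp N (length vs) else pp N (length vs)) else 0)"

lemma iter_range:
  assumes "a < N" "0 \<le> y" "y \<le> 1"
  shows "0 \<le> ((\<lambda>y. (real a + y) / real N) ^^ i) y \<and> ((\<lambda>y. (real a + y) / real N) ^^ i) y \<le> 1"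
proof (induction i)
  case (Suc i)
  let ?z = "((\<lambda>y. (real a + y) / real N) ^^ i) y"
  have "real a + ?z \<le> real N" using Suc assms by linarith
  thus ?case using Suc assms by (simp add: divide_le_eq_1)
qed (use assms in simp)

lemma zp_range: "j < N div 2 \<Longrightarrow> 0 \<le> zp N j \<and> zp N j \<le> 1"
  unfolding zp_def by (rule iter_range) auto

lemma pp_range: assumes "j < N div 2" shows "0 \<le> pp N j \<and> pp N j \<le> 1"
proof -
  have a: "2*j+1 < N" using assms by linarith
  have "real (2*j) / real N \<le> 1" using a by (simp add: divide_le_eq_1)
  hence "real (2*j+1) + real (2*j) / real N \<le> real N" using a by linarith
  moreover have "real N > 0" using a by simp
  ultimately show ?thesis unfolding pp_def by (simp add: divide_le_eq_1)
qed

lemma qs_range: "0 \<le> qs N vs \<and> qs N vs \<le> 1"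
  unfolding qs_def using zp_range pp_range by auto

lemma hZ_nonneg: "m > 0 \<Longrightarrow> hZ b g m i \<ge> 0"
  by (induction i) auto

lemma hZ_zero_iff:
  assumes "m \<ge> 2"
  shows "hZ b g m (Suc i) = 0 \<longleftrightarrow> \<not> b \<and> \<not> g"
proof (cases b)
  case True
  have e: "hZ b g m (Suc i) = (1 + (if g then hZ b g m i else 0)) / m" using True by simp
  have "1 \<le> 1 + (if g then hZ b g m i else 0)" using hZ_nonneg[of m] assms by (simp del: hZ.simps)
  hence "1 / m \<le> (1 + (if g then hZ b g m i else 0)) / m" by (rule divide_right_mono) (use assms in simp)
  hence "hZ b g m (Suc i) \<ge> 1 / m" unfolding e .
  moreover have "1 / m > 0" using assms by simp
  ultimately show ?thesis using True by auto
next
  case False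
  show ?thesis
  proof (cases g)
    case True
    with False have "hZ b g m (Suc i) = 1 / m ^ Suc i" using hZ_01 by simp
    thus ?thesis using assms True by simp
  qed (use False in simp)
qed

context ssm
begin

lemma card_lt_Suc: "card {d\<in>D. d < Suc a} = card {d\<in>D. d < a} + (if a \<in> D then 1 else 0)"
proof -
  have e: "{d\<in>D. d < Suc a} = {d\<in>D. d < a} \<union> (if a \<in> D then {a} else {})"
    by (auto simp: less_Suc_eq)
  have f: "finite {d\<in>D. d < a}" by simp
  show ?thesis unfolding e using f by (auto simp: card_insert_if)
qed

lemma ZG:
  assumes j: "j < N div 2" and z: "\<forall>d\<in>D. 2*j \<le> d"
  shows "G (zp N j) = hZ (2*j \<in> D) (2*j+1 \<in> D) (real n) (Suc N)"
proof -
  let ?f = "\<lambda>y. (real (2*j+1) + y) / real N"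
  have a: "2*j+1 < N" using j by linarith
  have c0: "card {d\<in>D. d < 2*j} = 0" using z by auto
  have "G ((?f ^^ i) 1) = hZ (2*j \<in> D) (2*j+1 \<in> D) (real n) i" for i
  proof (induction i)
    case 0 then show ?case using G_1 by simp
  next
    case (Suc i)
    let ?y = "(?f ^^ i) 1"
    have y: "0 \<le> ?y" "?y \<le> 1" using iter_range[OF a, of 1 i] by auto
    have "G ((?f ^^ Suc i) 1) = G ((real (2*j+1) + ?y) / real N)" by simp
    also have "\<dots> = (real (card {d\<in>D. d < 2*j+1}) + (if 2*j+1 \<in> D then G ?y else 0)) / real n"
      by (rule G_step[OF a y])
    also have "card {d\<in>D. d < 2*j+1} = (if 2*j \<in> D then 1 else 0)"
      using card_lt_Suc[of "2*j"] c0 by simp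
    finally show ?case using Suc by simp
  qed
  thus ?thesis unfolding zp_def by blast
qed

lemma PG:
  assumes j: "j < N div 2"
  shows "G (pp N j) = (real (card {d\<in>D. d < 2*j}) + (if 2*j \<in> D then 1 else 0)
     + (if 2*j+1 \<in> D then real (card {d\<in>D. d < 2*j}) / real n else 0)) / real n"
proof -
  have a: "2*j+1 < N" using j by linarith
  have Np: "real N > 0" using N3 by simp
  have y: "0 \<le> real (2*j) / real N" "real (2*j) / real N \<le> 1" using a Np by (auto simp: divide_le_eq_1)
  have "G (real (2*j) / real N) = G ((real (2*j) + 0) / real N)" by simp
  also have "\<dots> = (real (card {d\<in>D. d < 2*j}) + (if 2*j \<in> D then G 0 else 0)) / real n"
    by (rule G_step) (use a in auto)
  finally have Gy: "G (real (2*j) / real N) = real (card {d\<in>D. d < 2*j}) / real n" using G_0 by simp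
  have "G (pp N j) = (real (card {d\<in>D. d < 2*j+1}) + (if 2*j+1 \<in> D then G (real (2*j) / real N) else 0)) / real n"
    unfolding pp_def by (rule G_step[OF a y])
  also have "card {d\<in>D. d < 2*j+1} = card {d\<in>D. d < 2*j} + (if 2*j \<in> D then 1 else 0)"
    using card_lt_Suc[of "2*j"] by simp
  finally show ?thesis unfolding Gy by simp
qed

end

locale dvb =
  fixes N :: nat and B :: "nat list"
  assumes dv: "digit_vector N B" and N3: "N \<ge> 3"
begin

sublocale ssm N B "mu_B B"
  by unfold_locales (rule dv, rule N3, rule mu_B_ss[OF dv N3])

lemma F_G: "0 \<le> x \<Longrightarrow> F_B B x = G x"
  unfolding F_B_def using F_eq_G by simp

definition zph :: "nat \<Rightarrow> bool" where "zph j \<longleftrightarrow> (\<forall>d\<in>D. 2*j \<le> d)"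
definition val :: "nat \<Rightarrow> real" where "val j = G (if zph j then zp N j else pp N j)"

lemma zph_Suc: "zph (Suc j) \<longleftrightarrow> zph j \<and> 2*j \<notin> D \<and> 2*j+1 \<notin> D"
  unfolding zph_def by (auto simp: not_less_eq_eq) (metis Suc_leI le_antisym not_less_eq_eq)

lemma val_zero_iff:
  assumes j: "j < N div 2"
  shows "val j = 0 \<longleftrightarrow> zph (Suc j)"
proof (cases "zph j")
  case True
  have "val j = hZ (2*j \<in> D) (2*j+1 \<in> D) (real n) (Suc N)"
    unfolding val_def using True ZG[OF j] unfolding zph_def by simp
  thus ?thesis using hZ_zero_iff[OF rn2] True zph_Suc by simp
next
  case False
  then obtain d where d: "d \<in> D" "d < 2*j" unfolding zph_def by auto
  have "card {d\<in>D. d < 2*j} \<noteq> 0" using d by auto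
  hence c1: "real (card {d\<in>D. d < 2*j}) \<ge> 1" by linarith
  have "val j = (real (card {d\<in>D. d < 2*j}) + (if 2*j \<in> D then 1 else 0)
     + (if 2*j+1 \<in> D then real (card {d\<in>D. d < 2*j}) / real n else 0)) / real n"
    unfolding val_def using False PG[OF j] by simp
  moreover have "(real (card {d\<in>D. d < 2*j}) + (if 2*j \<in> D then 1 else 0)
     + (if 2*j+1 \<in> D then real (card {d\<in>D. d < 2*j}) / real n else 0)) > 0"
    using c1 rn2 by (simp add: add_pos_nonneg)
  ultimately have "val j > 0" using rn2 by simp
  thus ?thesis using False zph_Suc by simp
qed

lemma allzero: "j \<le> N div 2 \<Longrightarrow> (\<forall>i<j. val i = 0) \<longleftrightarrow> zph j"
proof (induction j)
  case 0 then show ?case unfolding zph_def by simp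
next
  case (Suc j)
  have "(\<forall>i<Suc j. val i = 0) \<longleftrightarrow> (\<forall>i<j. val i = 0) \<and> val j = 0" by (auto simp: less_Suc_eq)
  also have "\<dots> \<longleftrightarrow> zph j \<and> zph (Suc j)" using Suc val_zero_iff[of j] by simp
  also have "\<dots> \<longleftrightarrow> zph (Suc j)" using zph_Suc by auto
  finally show ?case .
qed

lemma answers_eq: "j \<le> N div 2 \<Longrightarrow> answers (qs N) (F_B B) j = map val [0..<j]"
proof (induction j)
  case (Suc j)
  have j: "j < N div 2" using Suc by simp
  have IH: "answers (qs N) (F_B B) j = map val [0..<j]" using Suc by simp
  have "qs N (map val [0..<j]) = (if zph j then zp N j else pp N j)"
    unfolding qs_def using j allzero[of j] by auto
  moreover have "0 \<le> (if zph j then zp N j else pp N j)" using zp_range[OF j] pp_range[OF j] by simp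
  ultimately have "F_B B (qs N (map val [0..<j])) = val j" using F_G unfolding val_def by simp
  thus ?case using IH by simp
qed simp

end

lemma DP:
  fixes c n :: real
  assumes c: "0 < c" "c \<le> n"
    and full: "c = n \<longrightarrow> \<not> b \<and> \<not> g \<and> \<not> b' \<and> \<not> g'"
    and eq: "(c + (if b then 1 else 0) + (if g then c / n else 0)) / n = (c + (if b' then 1 else 0) + (if g' then c / n else 0)) / n"
  shows "b = b' \<and> g = g'"
proof (cases "c = n")
  case True with full show ?thesis by simp
next
  case False
  hence r: "0 < c / n" "c / n < 1" using c by auto
  have np: "n \<noteq> 0" using c by simp
  from eq have e2: "(if b then 1 else 0) + (if g then c / n else 0) = (if b' then (1::real) else 0) + (if g' then c / n else 0)"
    using np by (simp add: divide_cancel_right)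
  show ?thesis
  proof (cases b; cases g; cases b'; cases g')
  qed (use e2 r in auto)
qed

lemma digit_set_inj:
  assumes "digit_vector N B" "digit_vector N B'" "digit_set B = digit_set B'"
  shows "B = B'"
proof (rule nth_equalityI)
  show "length B = length B'" using assms unfolding digit_vector_def by simp
  fix i assume i: "i < length B"
  have i': "i < length B'" using i assms unfolding digit_vector_def by simp
  have "B ! i \<in> {0,1}" using i assms nth_mem unfolding digit_vector_def by blast
  moreover have "B' ! i \<in> {0,1}" using i' assms nth_mem unfolding digit_vector_def by blast
  moreover have "(B ! i = 1) = (B' ! i = 1)"
    using assms(3) i i' unfolding digit_set_def by (metis (mono_tags, lifting) mem_Collect_eq)
  ultimately show "B ! i = B' ! i" by auto
qed



lemma decode:
  assumes d1: "dvb N B" and d2: "dvb N B'"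
    and eqv: "\<forall>i<N div 2. dvb.val N B i = dvb.val N B' i"
  shows "B = B'"
proof -
  interpret b1: dvb N B by (rule d1)
  interpret b2: dvb N B' by (rule d2)
  let ?D = "digit_set B" and ?D' = "digit_set B'" and ?n = "sum_list B" and ?n' = "sum_list B'"
  have inv: "(\<forall>d<2*j. (d \<in> ?D) = (d \<in> ?D')) \<and> ((\<exists>d\<in>?D. d < 2*j) \<longrightarrow> ?n = ?n')"
    if "j \<le> N div 2" for j
    using that
  proof (induction j)
    case 0 then show ?case by simp
  next
    case (Suc j)
    have j: "j < N div 2" using Suc by simp
    have same: "\<forall>d<2*j. (d \<in> ?D) = (d \<in> ?D')" and samen: "(\<exists>d\<in>?D. d < 2*j) \<longrightarrow> ?n = ?n'"
      using Suc j by auto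
    have ex_eq: "(\<exists>d\<in>?D. d < 2*j) = (\<exists>d\<in>?D'. d < 2*j)" using same by blast
    have zeq: "b1.zph j = b2.zph j" unfolding b1.zph_def b2.zph_def using ex_eq by (auto simp: not_less)
    have veq: "b1.val j = b2.val j" using eqv j by simp
    show ?case
    proof (cases "b1.zph j")
      case True
      hence True': "b2.zph j" using zeq by simp
      have v1: "b1.val j = hZ (2*j \<in> ?D) (2*j+1 \<in> ?D) (real ?n) (Suc N)"
        unfolding b1.val_def if_P[OF True] by (rule b1.ZG[OF j]) (use True in \<open>simp add: b1.zph_def\<close>)
      have v2: "b2.val j = hZ (2*j \<in> ?D') (2*j+1 \<in> ?D') (real ?n') (Suc N)"
        unfolding b2.val_def if_P[OF True'] by (rule b2.ZG[OF j]) (use True' in \<open>simp add: b2.zph_def\<close>)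
      have "hZ (2*j \<in> ?D) (2*j+1 \<in> ?D) (real ?n) (Suc N) = hZ (2*j \<in> ?D') (2*j+1 \<in> ?D') (real ?n') (Suc N)"
        using veq unfolding v1 v2 .
      from DZ[OF b1.N3 b1.n2 b1.nN b2.n2 b2.nN this]
      have bb: "(2*j \<in> ?D) = (2*j \<in> ?D')" "(2*j+1 \<in> ?D) = (2*j+1 \<in> ?D')"
        and nn: "(2*j \<in> ?D \<or> 2*j+1 \<in> ?D) \<longrightarrow> ?n = ?n'" by auto
      have part1: "\<forall>d<2 * Suc j. (d \<in> ?D) = (d \<in> ?D')"
      proof (intro allI impI)
        fix d assume "d < 2 * Suc j"
        hence "d < 2*j \<or> d = 2*j \<or> d = 2*j+1" by auto
        thus "(d \<in> ?D) = (d \<in> ?D')" using same bb by auto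
      qed
      have part2: "(\<exists>d\<in>?D. d < 2 * Suc j) \<longrightarrow> ?n = ?n'"
      proof
        assume "\<exists>d\<in>?D. d < 2 * Suc j"
        then obtain d where d: "d \<in> ?D" "d < 2 * Suc j" by auto
        have "2*j \<le> d" using True d(1) unfolding b1.zph_def by auto
        hence "d = 2*j \<or> d = 2*j+1" using d(2) by auto
        thus "?n = ?n'" using nn d(1) by auto
      qed
      show ?thesis using part1 part2 by blast
    next
      case False
      hence False': "\<not> b2.zph j" using zeq by simp
      have ex: "\<exists>d\<in>?D. d < 2*j" using False unfolding b1.zph_def by (auto simp: not_le)
      hence nn: "?n = ?n'" using samen by simp
      have ceq: "{d\<in>?D. d < 2*j} = {d\<in>?D'. d < 2*j}" using same by auto
      define c where "c = card {d\<in>?D. d < 2*j}"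
      have c': "card {d\<in>?D'. d < 2*j} = c" unfolding c_def ceq ..
      have cpos: "c \<noteq> 0" unfolding c_def using ex by auto
      have cle: "c \<le> ?n" unfolding c_def b1.cardD[symmetric] by (rule card_mono) auto
      have full: "c = ?n \<longrightarrow> \<not> (2*j \<in> ?D) \<and> \<not> (2*j+1 \<in> ?D) \<and> \<not> (2*j \<in> ?D') \<and> \<not> (2*j+1 \<in> ?D')"
      proof
        assume cn: "c = ?n"
        have "{d\<in>?D. d < 2*j} = ?D"
          by (rule card_subset_eq) (use cn b1.cardD c_def in auto)
        moreover have "{d\<in>?D'. d < 2*j} = ?D'"
          by (rule card_subset_eq) (use cn nn b2.cardD c' in auto)
        ultimately have l1: "\<And>x. x \<in> ?D \<Longrightarrow> x < 2*j" and l2: "\<And>x. x \<in> ?D' \<Longrightarrow> x < 2*j" by blast+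
        show "\<not> (2*j \<in> ?D) \<and> \<not> (2*j+1 \<in> ?D) \<and> \<not> (2*j \<in> ?D') \<and> \<not> (2*j+1 \<in> ?D')"
          using l1[of "2*j"] l1[of "2*j+1"] l2[of "2*j"] l2[of "2*j+1"] by auto
      qed
      have v1: "b1.val j = (real c + (if 2*j \<in> ?D then 1 else 0) + (if 2*j+1 \<in> ?D then real c / real ?n else 0)) / real ?n"
        unfolding b1.val_def if_not_P[OF False] b1.PG[OF j] c_def ..
      have v2: "b2.val j = (real c + (if 2*j \<in> ?D' then 1 else 0) + (if 2*j+1 \<in> ?D' then real c / real ?n else 0)) / real ?n"
        unfolding b2.val_def if_not_P[OF False'] b2.PG[OF j] c' nn ..
      have "(real c + (if 2*j \<in> ?D then 1 else 0) + (if 2*j+1 \<in> ?D then real c / real ?n else 0)) / real ?n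
          = (real c + (if 2*j \<in> ?D' then 1 else 0) + (if 2*j+1 \<in> ?D' then real c / real ?n else 0)) / real ?n"
        using veq unfolding v1 v2 .
      from DP[of "real c" "real ?n", OF _ _ _ this] cpos cle full
      have bb: "(2*j \<in> ?D) = (2*j \<in> ?D')" "(2*j+1 \<in> ?D) = (2*j+1 \<in> ?D')" by auto
      have part1: "\<forall>d<2 * Suc j. (d \<in> ?D) = (d \<in> ?D')"
      proof (intro allI impI)
        fix d assume "d < 2 * Suc j"
        hence "d < 2*j \<or> d = 2*j \<or> d = 2*j+1" by auto
        thus "(d \<in> ?D) = (d \<in> ?D')" using same bb by auto
      qed
      show ?thesis using part1 nn by blast
    qed
  qed
  let ?K = "N div 2"
  from inv[of ?K] have same: "\<forall>d<2*?K. (d \<in> ?D) = (d \<in> ?D')"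
    and samen: "(\<exists>d\<in>?D. d < 2*?K) \<longrightarrow> ?n = ?n'" by auto
  have "?D = ?D'"
  proof (cases "even N")
    case True
    hence K2: "2 * ?K = N" by simp
    have "(d \<in> ?D) = (d \<in> ?D')" for d
    proof (cases "d < N")
      case True thus ?thesis using same K2 by simp
    next
      case False thus ?thesis using b1.D_lt[of d] b2.D_lt[of d] by blast
    qed
    thus ?thesis by blast
  next
    case False
    hence NK: "N = Suc (2 * ?K)" by presburger
    have "\<exists>d\<in>?D. d < 2*?K"
    proof (rule ccontr)
      assume nex: "\<not> ?thesis"
      have "?D \<subseteq> {2*?K}"
      proof
        fix x assume x: "x \<in> ?D"
        have "2*?K \<le> x" using nex x by (auto simp: not_less)
        moreover have "x < Suc (2*?K)" using b1.D_lt[OF x] NK by simp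
        ultimately show "x \<in> {2*?K}" by simp
      qed
      hence "card ?D \<le> card {2*?K}" by (intro card_mono) auto
      hence "card ?D \<le> 1" by simp
      thus False using b1.cardD b1.n2 by simp
    qed
    with samen have nn: "?n = ?n'" by simp
    have cD: "card ?D = card {d\<in>?D. d < 2*?K} + (if 2*?K \<in> ?D then 1 else 0)"
    proof -
      have "{d\<in>?D. d < Suc (2*?K)} = ?D" using b1.D_lt NK by auto
      thus ?thesis using b1.card_lt_Suc[of "2*?K"] by simp
    qed
    have cD': "card ?D' = card {d\<in>?D'. d < 2*?K} + (if 2*?K \<in> ?D' then 1 else 0)"
    proof -
      have "{d\<in>?D'. d < Suc (2*?K)} = ?D'" using b2.D_lt NK by auto
      thus ?thesis using b2.card_lt_Suc[of "2*?K"] by simp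
    qed
    have "{d\<in>?D. d < 2*?K} = {d\<in>?D'. d < 2*?K}" using same by auto
    hence top: "(2*?K \<in> ?D) = (2*?K \<in> ?D')" using cD cD' b1.cardD b2.cardD nn by (auto split: if_splits)
    show ?thesis
    proof (intro set_eqI iffI)
      fix d assume "d \<in> ?D"
      hence "d < 2*?K \<or> d = 2*?K" using b1.D_lt NK by fastforce
      thus "d \<in> ?D'" using same top \<open>d \<in> ?D\<close> by auto
    next
      fix d assume "d \<in> ?D'"
      hence "d < 2*?K \<or> d = 2*?K" using b2.D_lt NK by fastforce
      thus "d \<in> ?D" using same top \<open>d \<in> ?D'\<close> by auto
    qed
  qed
  thus ?thesis using digit_set_inj b1.dv b2.dv by blast
qed



theorem theorem2p2:
  fixes N :: nat
  assumes "N \<ge> 3"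
  shows "\<exists>(k::nat) (q :: real list \<Rightarrow> real).
           k \<le> N div 2 \<and> (\<forall>vs. q vs \<in> {0..1}) \<and>
           (\<forall>B B'. digit_vector N B \<longrightarrow> digit_vector N B' \<longrightarrow>
              answers q (F_B B) k = answers q (F_B B') k \<longrightarrow> B = B')"
proof (intro exI conjI allI impI)
  show "N div 2 \<le> N div 2" by simp
  show "qs N vs \<in> {0..1}" for vs using qs_range by simp
  fix B B' assume b: "digit_vector N B" and b': "digit_vector N B'"
    and eq: "answers (qs N) (F_B B) (N div 2) = answers (qs N) (F_B B') (N div 2)"
  interpret b1: dvb N B using b assms by unfold_locales
  interpret b2: dvb N B' using b' assms by unfold_locales
  have "map b1.val [0..<N div 2] = map b2.val [0..<N div 2]"
    using eq b1.answers_eq b2.answers_eq by simp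
  hence "\<forall>i<N div 2. b1.val i = b2.val i" by (simp add: map_eq_conv)
  thus "B = B'" by (rule decode[OF b1.dvb_axioms b2.dvb_axioms])
qed


end
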